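(* Suppose Assumptions A and C hold. If there is a sequence $(h_j)_{j\in\mathbb N}$ in $\mathbb R^N$ with $h_j\to 0$ such that for every semidefinite face $\mathcal F$ of $\Gamma$ and every $j\in\mathbb N$ $$0\notin \operatorname{Proj}_{\mathcal V(\mathcal F)}\{b(\gamma)+h_j:\gamma\in\mathcal F\},$$ then $\mathrm{Opt}=\mathrm{Opt}_{\mathrm{SDP}}$.
   Context: Fix integers $N\ge 1$, $m_I,m_E\ge 0$, $m:=m_I+m_E\ge 1$; $[a,b]=\{a,\dots,b\}$, $[n]=[1,n]$. For $i\in[0,m]$ let $q_i(x)=x^\top A_ix+2b_i^\top x+c_i$ with $A_i\in\mathbb S^N$, $b_i\in\mathbb R^N$, $c_i\in\mathbb R$. $\mathrm{Opt}:=\inf\{q_0(x): q_i(x)\le 0\ \forall i\in[m_I],\ q_i(x)=0\ \forall i\in[m_I+1,m]\}$. Let $Q_i=\begin{pmatrix}c_i& b_i^\top\\ b_i& A_i\end{pmatrix}$; $\mathrm{Opt}_{\mathrm{SDP}}:=\inf\{\langle Q_0,Y\rangle: Y=\begin{pmatrix}1&x^\top\\ x& X\end{pmatrix}\succeq 0,\ X\in\mathbb S^N,\ \langle Q_i,Y\rangle\le 0\ \forall i\in[m_I],\ \langle Q_i,Y\rangle=0\ \forall i\in[m_I+1,m]\}$. For $\gamma\in\mathbb R^m$: $A(\gamma)=A_0+\sum\gamma_iA_i$, $b(\gamma)=b_0+\sum\gamma_ib_i$; $\Gamma:=\{\gamma: A(\gamma)\succeq0,\ \gamma_i\ge0\ \forall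 i\in[m_I]\}$. Assumption A: the QCQP feasible set is nonempty and some $\gamma^*$ with $\gamma^*_i\ge0$ ($i\in[m_I]$) has $A(\gamma^* )\succ0$. Assumption C: $\Gamma$ is a polyhedron. A nonempty face $\mathcal F$ of $\Gamma$ is semidefinite if no $\gamma\in\mathcal F$ has $A(\gamma)\succ0$; $\mathcal V(\mathcal F):=\{v\in\mathbb R^N: A(\gamma)v=0\ \forall\gamma\in\mathcal F\}$; $\operatorname{Proj}_V$ is orthogonal projection onto subspace $V$. *)

theory Defs
  imports "HOL-Analysis.Analysis"
begin

definition sym_mat :: "real^'k^'k \<Rightarrow> bool" where
  "sym_mat M \<longleftrightarrow> transpose M = M"

definition psd :: "real^'k^'k \<Rightarrow> bool" where
  "psd M \<longleftrightarrow> sym_mat M \<and> (\<forall>v. 0 \<le> v \<bullet> (M *v v))"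

definition pd :: "real^'k^'k \<Rightarrow> bool" where
  "pd M \<longleftrightarrow> sym_mat M \<and> (\<forall>v. v \<noteq> 0 \<longrightarrow> 0 < v \<bullet> (M *v v))"

(* block matrix ( c  b^T ; b  A ) of size (N+1); index None plays the role of index 0 *)
definition blk :: "real \<Rightarrow> real^'n \<Rightarrow> real^'n^'n \<Rightarrow> real^('n option)^('n option)" where
  "blk c b A = (\<chi> i j. case (i, j) of
       (None, None) \<Rightarrow> c
     | (None, Some l) \<Rightarrow> b $ l
     | (Some k, None) \<Rightarrow> b $ k
     | (Some k, Some l) \<Rightarrow> A $ k $ l)"

definition frob :: "real^'k^'k \<Rightarrow> real^'k^'k \<Rightarrow> real" where
  "frob Q Y = (\<Sum>i\<in>UNIV. \<Sum>j\<in>UNIV. Q $ i $ j * Y $ i $ j)"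

definition qf :: "real^'n^'n \<Rightarrow> real^'n \<Rightarrow> real \<Rightarrow> real^'n \<Rightarrow> real" where
  "qf A b c x = x \<bullet> (A *v x) + 2 * (b \<bullet> x) + c"

(* Constraint indices are the elements of the finite type 'm (so m = CARD('m));
   I is the set of inequality indices [m_I], the remaining ones are equalities. *)
definition qcqp_feas ::
  "('m::finite) set \<Rightarrow> ('m \<Rightarrow> real^'n^'n) \<Rightarrow> ('m \<Rightarrow> real^'n) \<Rightarrow> ('m \<Rightarrow> real) \<Rightarrow> (real^'n) set" where
  "qcqp_feas I A b c = {x. (\<forall>i\<in>I. qf (A i) (b i) (c i) x \<le> 0) \<and> (\<forall>i. i \<notin> I \<longrightarrow> qf (A i) (b i) (c i) x = 0)}"

definition Opt ::
  "real^'n^'n \<Rightarrow> real^'n \<Rightarrow> real \<Rightarrow>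
   ('m::finite) set \<Rightarrow> ('m \<Rightarrow> real^'n^'n) \<Rightarrow> ('m \<Rightarrow> real^'n) \<Rightarrow> ('m \<Rightarrow> real) \<Rightarrow> ereal" where
  "Opt A0 b0 c0 I A b c = (INF x\<in>qcqp_feas I A b c. ereal (qf A0 b0 c0 x))"

definition sdp_feas ::
  "('m::finite) set \<Rightarrow> ('m \<Rightarrow> real^'n^'n) \<Rightarrow> ('m \<Rightarrow> real^'n) \<Rightarrow> ('m \<Rightarrow> real) \<Rightarrow> (real^('n option)^('n option)) set" where
  "sdp_feas I A b c = {Y. \<exists>x X. Y = blk 1 x X \<and> sym_mat X \<and> psd Y \<and>
      (\<forall>i\<in>I. frob (blk (c i) (b i) (A i)) Y \<le> 0) \<and>
      (\<forall>i. i \<notin> I \<longrightarrow> frob (blk (c i) (b i) (A i)) Y = 0)}"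

definition Opt_SDP ::
  "real^'n^'n \<Rightarrow> real^'n \<Rightarrow> real \<Rightarrow>
   ('m::finite) set \<Rightarrow> ('m \<Rightarrow> real^'n^'n) \<Rightarrow> ('m \<Rightarrow> real^'n) \<Rightarrow> ('m \<Rightarrow> real) \<Rightarrow> ereal" where
  "Opt_SDP A0 b0 c0 I A b c = (INF Y\<in>sdp_feas I A b c. ereal (frob (blk c0 b0 A0) Y))"

definition Agam :: "real^'n^'n \<Rightarrow> ('m::finite \<Rightarrow> real^'n^'n) \<Rightarrow> real^'m \<Rightarrow> real^'n^'n" where
  "Agam A0 A g = A0 + (\<Sum>i\<in>UNIV. (g $ i) *\<^sub>R A i)"

definition bgam :: "real^'n \<Rightarrow> ('m::finite \<Rightarrow> real^'n) \<Rightarrow> real^'m \<Rightarrow> real^'n" where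
  "bgam b0 b g = b0 + (\<Sum>i\<in>UNIV. (g $ i) *\<^sub>R b i)"

definition Gam :: "real^'n^'n \<Rightarrow> ('m::finite \<Rightarrow> real^'n^'n) \<Rightarrow> 'm set \<Rightarrow> (real^'m) set" where
  "Gam A0 A I = {g. psd (Agam A0 A g) \<and> (\<forall>i\<in>I. 0 \<le> g $ i)}"

definition semidef_face :: "real^'n^'n \<Rightarrow> ('m::finite \<Rightarrow> real^'n^'n) \<Rightarrow> 'm set \<Rightarrow> (real^'m) set \<Rightarrow> bool" where
  "semidef_face A0 A I F \<longleftrightarrow> F \<noteq> {} \<and> F face_of Gam A0 A I \<and> (\<forall>g\<in>F. \<not> pd (Agam A0 A g))"

definition Vsp :: "real^'n^'n \<Rightarrow> ('m::finite \<Rightarrow> real^'n^'n) \<Rightarrow> (real^'m) set \<Rightarrow> (real^'n) set" where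
  "Vsp A0 A F = {v. \<forall>g\<in>F. Agam A0 A g *v v = 0}"

definition proj :: "('a::real_inner) set \<Rightarrow> 'a \<Rightarrow> 'a" where
  "proj V x = (THE p. p \<in> V \<and> (\<forall>v\<in>V. (x - p) \<bullet> v = 0))"

end

theory Submission
  imports Defs
begin


definition Alin :: "('m::finite \<Rightarrow> real^'n^'n) \<Rightarrow> real^'m \<Rightarrow> real^'n^'n" where
  "Alin A g = (\<Sum>i\<in>UNIV. (g $ i) *\<^sub>R A i)"
definition blin :: "('m::finite \<Rightarrow> real^'n) \<Rightarrow> real^'m \<Rightarrow> real^'n" where
  "blin b g = (\<Sum>i\<in>UNIV. (g $ i) *\<^sub>R b i)"
definition clin :: "('m::finite \<Rightarrow> real) \<Rightarrow> real^'m \<Rightarrow> real" where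
  "clin c g = (\<Sum>i\<in>UNIV. (g $ i) * c i)"
definition svec :: "('m::finite \<Rightarrow> real^'n^'n) \<Rightarrow> ('m \<Rightarrow> real^'n) \<Rightarrow> ('m \<Rightarrow> real) \<Rightarrow> real^'n \<Rightarrow> real^'m" where
  "svec A b c x = (\<chi> i. qf (A i) (b i) (c i) x)"

lemma Agam_lin: "Agam A0 A g = A0 + Alin A g"
  by (simp add: Agam_def Alin_def)
lemma bgam_lin: "bgam b0 b g = b0 + blin b g"
  by (simp add: bgam_def blin_def)

lemma Alin_add: "Alin A (g + u) = Alin A g + Alin A u"
  by (simp add: Alin_def scaleR_add_left sum.distrib)
lemma Alin_scale: "Alin A (r *\<^sub>R u) = r *\<^sub>R Alin A u"
  by (simp add: Alin_def scaleR_sum_right)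
lemma blin_add: "blin b (g + u) = blin b g + blin b u"
  by (simp add: blin_def scaleR_add_left sum.distrib)
lemma blin_scale: "blin b (r *\<^sub>R u) = r *\<^sub>R blin b u"
  by (simp add: blin_def scaleR_sum_right)
lemma clin_add: "clin c (g + u) = clin c g + clin c u"
  by (simp add: clin_def distrib_right sum.distrib)
lemma clin_scale: "clin c (r *\<^sub>R u) = r * clin c u"
  by (simp add: clin_def sum_distrib_left mult.assoc)

lemma sym_inner:
  assumes "sym_mat M" shows "v \<bullet> (M *v w) = w \<bullet> (M *v v)"
proof -
  have "v \<bullet> (M *v w) = (v v* M) \<bullet> w" by (simp add: dot_lmul_matrix)
  also have "v v* M = transpose M *v v" by (simp add: transpose_matrix_vector)
  also have "transpose M = M" using assms by (simp add: sym_mat_def)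
  finally show ?thesis by (simp add: inner_commute)
qed

lemma sym_mat_add: "sym_mat M \<Longrightarrow> sym_mat N \<Longrightarrow> sym_mat (M + N)"
  by (simp add: sym_mat_def transpose_def vec_eq_iff)
lemma sym_mat_scale: "sym_mat M \<Longrightarrow> sym_mat (r *\<^sub>R M)"
  by (simp add: sym_mat_def transpose_def vec_eq_iff)
lemma sym_mat_0: "sym_mat 0"
  by (simp add: sym_mat_def transpose_def vec_eq_iff)
lemma sym_mat_sum: "(\<And>i. i \<in> S \<Longrightarrow> sym_mat (M i)) \<Longrightarrow> sym_mat (\<Sum>i\<in>S. M i)"
  by (induction S rule: infinite_finite_induct) (auto simp: sym_mat_0 sym_mat_add)

lemma sym_Alin: "(\<And>i. sym_mat (A i)) \<Longrightarrow> sym_mat (Alin A g)"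
  unfolding Alin_def by (intro sym_mat_sum sym_mat_scale) auto
lemma sym_Agam: "sym_mat A0 \<Longrightarrow> (\<And>i. sym_mat (A i)) \<Longrightarrow> sym_mat (Agam A0 A g)"
  by (simp add: Agam_lin sym_Alin sym_mat_add)

lemma qf_shift:
  assumes "sym_mat M"
  shows "qf M \<beta> \<kappa> (x + t *\<^sub>R w) = qf M \<beta> \<kappa> x + 2*t*(w \<bullet> (M *v x + \<beta>)) + t^2*(w \<bullet> (M *v w))"
proof -
  have s: "x \<bullet> (M *v w) = w \<bullet> (M *v x)" using sym_inner[OF assms] .
  show ?thesis
    unfolding qf_def
    by (simp add: matrix_vector_right_distrib matrix_scaleR_vector_ac[symmetric] inner_add_left inner_add_right
        s algebra_simps power2_eq_square inner_commute[of \<beta>])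
qed

lemma qf_add: "qf (M + N) (\<beta> + \<beta>') (\<kappa> + \<kappa>') x = qf M \<beta> \<kappa> x + qf N \<beta>' \<kappa>' x"
  by (simp add: qf_def matrix_vector_mult_add_rdistrib inner_add_left inner_add_right algebra_simps)
lemma qf_scale: "qf (r *\<^sub>R M) (r *\<^sub>R \<beta>) (r * \<kappa>) x = r * qf M \<beta> \<kappa> x"
  by (simp add: qf_def scaleR_matrix_vector_assoc[symmetric] algebra_simps)
lemma qf_zero: "qf 0 0 0 x = 0"
  by (simp add: qf_def)
lemma qf_sum: "qf (\<Sum>i\<in>S. g i *\<^sub>R M i) (\<Sum>i\<in>S. g i *\<^sub>R \<beta> i) (\<Sum>i\<in>S. g i * \<kappa> i) x = (\<Sum>i\<in>S. g i * qf (M i) (\<beta> i) (\<kappa> i) x)"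
proof (induction S rule: infinite_finite_induct)
  case (insert i S)
  then show ?case by (simp add: qf_add qf_scale)
qed (auto simp: qf_zero)

lemma qf_lin: "qf (Alin A u) (blin b u) (clin c u) x = u \<bullet> svec A b c x"
  unfolding Alin_def blin_def clin_def qf_sum by (simp add: inner_vec_def svec_def)

lemma qf_gam: "qf (Agam A0 A g) (bgam b0 b g) (c0 + clin c g) x = qf A0 b0 c0 x + g \<bullet> svec A b c x"
  by (simp add: Agam_lin bgam_lin qf_add qf_lin)


definition outer :: "real^'n \<Rightarrow> real^'n \<Rightarrow> real^'n^'n" where
  "outer x y = (\<chi> k l. x $ k * y $ l)"

lemma mv_scaleR: "M *v (c *\<^sub>R v) = c *\<^sub>R (M *v (v::real^'n))"
  by (simp add: vec_eq_iff matrix_vector_mult_def sum_distrib_left algebra_simps)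

lemma outer_mult: "outer w w *v z = (w \<bullet> z) *\<^sub>R w"
  by (simp add: outer_def matrix_vector_mult_def vec_eq_iff inner_vec_def sum_distrib_left sum_distrib_right algebra_simps)

lemma frob_outer: "frob M (outer w w) = w \<bullet> (M *v w)"
  by (simp add: frob_def outer_def inner_vec_def matrix_vector_mult_def sum_distrib_left algebra_simps)

lemma frob_diff: "frob M (P - Q) = frob M P - frob M Q"
  by (simp add: frob_def algebra_simps sum_subtractf)

lemma frob_zero: "frob M 0 = 0"
  by (simp add: frob_def)

lemma sym_outer: "sym_mat (outer w w)"
  by (simp add: sym_mat_def outer_def transpose_def vec_eq_iff mult.commute)

lemma sym_mat_diff: "sym_mat M \<Longrightarrow> sym_mat N \<Longrightarrow> sym_mat (M - N)"
  by (simp add: sym_mat_def transpose_def vec_eq_iff)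

lemma quad_shift0:
  assumes "sym_mat M"
  shows "(x + t *\<^sub>R w) \<bullet> (M *v (x + t *\<^sub>R w)) = x \<bullet> (M *v x) + 2*t*(w \<bullet> (M *v x)) + t^2*(w \<bullet> (M *v w))"
  using qf_shift[OF assms, of 0 0 x t w] by (simp add: qf_def)

lemma psd_zero_quad:
  assumes P: "psd P" and z: "v \<bullet> (P *v v) = 0"
  shows "P *v v = 0"
proof -
  have sP: "sym_mat P" using P by (simp add: psd_def)
  define w where "w = P *v v"
  define a where "a = w \<bullet> (P *v v)"
  define k where "k = w \<bullet> (P *v w)"
  have a: "a = norm w ^ 2" by (simp add: a_def w_def power2_norm_eq_inner)
  have k0: "0 \<le> k" using P by (simp add: psd_def k_def)
  define t where "t = - a / (k + 1)"
  have nz: "k + 1 \<noteq> 0" using k0 by simp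
  have a_eq: "a = - t * (k + 1)" using nz by (simp add: t_def field_simps)
  have "0 \<le> (v + t *\<^sub>R w) \<bullet> (P *v (v + t *\<^sub>R w))" using P by (simp add: psd_def)
  also have "\<dots> = 2*t*a + t^2*k" unfolding quad_shift0[OF sP] z a_def k_def by simp
  also have "\<dots> = - (t^2 * (k + 2))" by (simp add: a_eq power2_eq_square algebra_simps)
  finally have "t^2 * (k + 2) \<le> 0" by simp
  moreover have "k + 2 > 0" using k0 by simp
  ultimately have "t^2 \<le> 0" by (simp add: mult_le_0_iff)
  then have "t = 0" by simp
  then have "a = 0" using a_eq by simp
  then show ?thesis using a by (simp add: w_def)
qed

lemma psd_frob_aux:
  fixes A P :: "real^'n^'n"
  assumes "psd A"
  shows "psd P \<Longrightarrow> 0 \<le> frob A P"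
proof (induction "DIM(real^'n) - dim {z. P *v z = 0}" arbitrary: P rule: less_induct)
  case less
  have sP: "sym_mat P" using less.prems by (simp add: psd_def)
  show ?case
  proof (cases "\<forall>v. P *v v = 0")
    case True
    then have "P = 0" by (metis matrix_eq matrix_vector_mult_0)
    then show ?thesis by (simp add: frob_zero)
  next
    case False
    then obtain v where v: "P *v v \<noteq> 0" by blast
    define d where "d = v \<bullet> (P *v v)"
    have "d \<noteq> 0" using psd_zero_quad[OF less.prems] v d_def by metis
    moreover have "d \<ge> 0" using less.prems by (simp add: psd_def d_def)
    ultimately have d: "d > 0" by simp
    define w where "w = (1 / sqrt d) *\<^sub>R (P *v v)"
    define P' where "P' = P - outer w w"
    have wz: "w \<bullet> z = (z \<bullet> (P *v v)) / sqrt d" for z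
      by (simp add: w_def inner_commute)
    have P'z: "P' *v z = P *v z - (w \<bullet> z) *\<^sub>R w" for z
      by (simp add: P'_def matrix_vector_mult_diff_rdistrib outer_mult)
    have psd': "psd P'"
      unfolding psd_def
    proof
      show "sym_mat P'" unfolding P'_def by (intro sym_mat_diff sP sym_outer)
      show "\<forall>z. 0 \<le> z \<bullet> (P' *v z)"
      proof
        fix z
        define a where "a = z \<bullet> (P *v v)"
        have avz: "v \<bullet> (P *v z) = a" using sym_inner[OF sP] a_def by simp
        have "0 \<le> (z + (- a/d) *\<^sub>R v) \<bullet> (P *v (z + (- a/d) *\<^sub>R v))"
          using less.prems by (simp add: psd_def)
        also have "\<dots> = z \<bullet> (P *v z) - a^2/d"
          unfolding quad_shift0[OF sP] avz d_def[symmetric] using d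
          by (simp add: field_simps power2_eq_square)
        also have "\<dots> = z \<bullet> (P' *v z)"
          using d by (simp add: P'z inner_diff_right wz a_def[symmetric] power2_eq_square real_sqrt_mult[symmetric]
              inner_commute[of z w])
        finally show "0 \<le> z \<bullet> (P' *v z)" .
      qed
    qed
    have sub: "{z. P *v z = 0} \<subseteq> {z. P' *v z = 0}"
    proof
      fix z assume "z \<in> {z. P *v z = 0}"
      then have "P *v z = 0" by simp
      moreover have "z \<bullet> (P *v v) = 0" using sym_inner[OF sP, of z v] \<open>P *v z = 0\<close> by simp
      ultimately show "z \<in> {z. P' *v z = 0}" by (simp add: P'z wz)
    qed
    have vin: "P' *v v = 0"
    proof -
      have "w \<bullet> v = d / sqrt d" by (simp add: wz d_def)
      also have "\<dots> = sqrt d" using d by (simp add: real_div_sqrt)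
      finally have "w \<bullet> v = sqrt d" .
      then show ?thesis using d by (simp add: P'z w_def)
    qed
    have ss: "span {z. P *v z = 0} \<subset> span {z. P' *v z = 0}"
    proof -
      have s1: "subspace {z. P *v z = (0::real^'n)}"
        by (rule linear_subspace_kernel) (simp add: matrix_vector_mul_linear)
      have s2: "subspace {z. P' *v z = (0::real^'n)}"
        by (rule linear_subspace_kernel) (simp add: matrix_vector_mul_linear)
      show ?thesis using sub vin v by (auto simp: span_eq_iff[THEN iffD2, OF s1] span_eq_iff[THEN iffD2, OF s2])
    qed
    then have "dim {z. P *v z = 0} < dim {z. P' *v z = 0}" by (rule dim_psubset)
    moreover have "dim {z. P' *v z = 0} \<le> DIM(real^'n)" by (rule dim_subset_UNIV)
    ultimately have "DIM(real^'n) - dim {z. P' *v z = 0} < DIM(real^'n) - dim {z. P *v z = 0}" by linarith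
    then have "0 \<le> frob A P'" using less.hyps psd' by blast
    moreover have "frob A P = frob A P' + w \<bullet> (A *v w)"
      by (simp add: P'_def frob_diff frob_outer)
    moreover have "0 \<le> w \<bullet> (A *v w)" using assms by (simp add: psd_def)
    ultimately show ?thesis by simp
  qed
qed

lemma psd_frob: "psd A \<Longrightarrow> psd P \<Longrightarrow> 0 \<le> frob A P"
  using psd_frob_aux by blast

lemma pd_coercive:
  fixes M :: "real^'n^'n"
  assumes "pd M"
  shows "\<exists>l>0. \<forall>v. l * (norm v)^2 \<le> v \<bullet> (M *v v)"
proof -
  have cont: "continuous_on (sphere 0 1) (\<lambda>v::real^'n. v \<bullet> (M *v v))"
    by (intro continuous_intros linear_continuous_on matrix_vector_mul_linear bounded_linear_inner_right
        linear_linear[THEN iffD1])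
  have "sphere (0::real^'n) 1 \<noteq> {}" by (simp add: sphere_eq_empty)
  then obtain u where u: "u \<in> sphere 0 1" and umin: "\<forall>y\<in>sphere 0 1. u \<bullet> (M *v u) \<le> y \<bullet> (M *v y)"
    using continuous_attains_inf[OF compact_sphere _ cont] by blast
  have "u \<noteq> 0" using u by auto
  then have pos: "0 < u \<bullet> (M *v u)" using assms by (simp add: pd_def)
  show ?thesis
  proof (intro exI[of _ "u \<bullet> (M *v u)"] conjI allI pos)
    fix v :: "real^'n"
    show "u \<bullet> (M *v u) * (norm v)^2 \<le> v \<bullet> (M *v v)"
    proof (cases "v = 0")
      case True then show ?thesis by simp
    next
      case False
      define y where "y = (1 / norm v) *\<^sub>R v"
      have "y \<in> sphere 0 1" using False by (simp add: y_def)
      then have "u \<bullet> (M *v u) \<le> y \<bullet> (M *v y)" using umin by blast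
      also have "y \<bullet> (M *v y) = (v \<bullet> (M *v v)) / (norm v)^2"
        by (simp add: y_def mv_scaleR power2_eq_square)
      finally show ?thesis using False by (simp add: field_simps)
    qed
  qed
qed

lemma mat_quad_bound:
  fixes N :: "real^'n^'n"
  shows "\<exists>B>0. \<forall>v. \<bar>v \<bullet> (N *v v)\<bar> \<le> B * (norm v)^2"
proof -
  obtain B where B: "B > 0" "\<And>x. norm (N *v x) \<le> B * norm x"
    using linear_bounded_pos[OF matrix_vector_mul_linear] by blast
  show ?thesis
  proof (intro exI[of _ B] conjI allI B(1))
    fix v
    have "\<bar>v \<bullet> (N *v v)\<bar> \<le> norm v * norm (N *v v)" by (rule Cauchy_Schwarz_ineq2)
    also have "\<dots> \<le> norm v * (B * norm v)" by (intro mult_left_mono B(2)) simp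
    finally show "\<bar>v \<bullet> (N *v v)\<bar> \<le> B * (norm v)^2" by (simp add: power2_eq_square algebra_simps)
  qed
qed

lemma pd_perturb:
  fixes M N :: "real^'n^'n"
  assumes "pd M" "sym_mat N"
  shows "\<exists>e>0. \<forall>s. \<bar>s\<bar> < e \<longrightarrow> pd (M + s *\<^sub>R N)"
proof -
  obtain l where l: "l > 0" "\<And>v. l * (norm v)^2 \<le> v \<bullet> (M *v v)" using pd_coercive[OF assms(1)] by blast
  obtain B where B: "B > 0" "\<And>v. \<bar>v \<bullet> (N *v v)\<bar> \<le> B * (norm v)^2" using mat_quad_bound by blast
  show ?thesis
  proof (intro exI[of _ "l / B"] conjI allI impI)
    show "0 < l / B" using l B by simp
    fix s :: real assume s: "\<bar>s\<bar> < l / B"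
    show "pd (M + s *\<^sub>R N)" unfolding pd_def
    proof (intro conjI allI impI)
      show "sym_mat (M + s *\<^sub>R N)" using assms by (intro sym_mat_add sym_mat_scale) (auto simp: pd_def)
      fix v :: "real^'n" assume v: "v \<noteq> 0"
      have nv: "(norm v)^2 > 0" using v by simp
      have "\<bar>s * (v \<bullet> (N *v v))\<bar> \<le> \<bar>s\<bar> * (B * (norm v)^2)"
        by (simp add: abs_mult mult_left_mono B(2))
      also have "\<dots> < (l / B) * (B * (norm v)^2)"
        by (intro mult_strict_right_mono s) (use B nv in auto)
      also have "\<dots> = l * (norm v)^2" using B by simp
      finally have "\<bar>s * (v \<bullet> (N *v v))\<bar> < l * (norm v)^2" .
      then have "0 < v \<bullet> (M *v v) + s * (v \<bullet> (N *v v))" using l(2)[of v] by linarith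
      then show "0 < v \<bullet> ((M + s *\<^sub>R N) *v v)"
        by (simp add: matrix_vector_mult_add_rdistrib scaleR_matrix_vector_assoc[symmetric] inner_add_right)
    qed
  qed
qed


lemma sum_option: "(\<Sum>i\<in>(UNIV :: ('a::finite) option set). f i) = f None + (\<Sum>k\<in>UNIV. f (Some k))"
proof -
  have "(UNIV :: 'a option set) = insert None (range Some)" by (rule UNIV_option_conv)
  then have "(\<Sum>i\<in>(UNIV :: 'a option set). f i) = (\<Sum>i\<in>insert None (range Some). f i)" by simp
  also have "\<dots> = f None + (\<Sum>i\<in>range Some. f i)" by (subst sum.insert) auto
  also have "(\<Sum>i\<in>range Some. f i) = (\<Sum>k\<in>UNIV. f (Some k))" by (subst sum.reindex) auto
  finally show ?thesis .
qed

definition ztail :: "real^('n option) \<Rightarrow> real^'n" where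
  "ztail z = (\<chi> k. z $ Some k)"

lemma frob_blk: "frob (blk c b A) (blk c' x X) = c * c' + 2 * (b \<bullet> x) + frob A X"
  by (simp add: frob_def blk_def sum_option inner_vec_def sum.distrib algebra_simps)

lemma quad_blk:
  "z \<bullet> (blk c b A *v z) = c * (z $ None)^2 + 2 * (z $ None) * (b \<bullet> ztail z) + ztail z \<bullet> (A *v ztail z)"
  by (simp add: blk_def inner_vec_def matrix_vector_mult_def sum_option ztail_def sum.distrib
      sum_distrib_left sum_distrib_right algebra_simps power2_eq_square)

lemma sym_blk: "sym_mat A \<Longrightarrow> sym_mat (blk c b A)"
  unfolding sym_mat_def blk_def transpose_def
  by (auto simp: vec_eq_iff split: option.splits)

lemma psd_blk_schur:
  fixes x :: "real^'n" and X :: "real^'n^'n"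
  assumes "psd (blk 1 x X)" "sym_mat X"
  shows "psd (X - outer x x)"
  unfolding psd_def
proof (intro conjI allI)
  show "sym_mat (X - outer x x)" using assms by (intro sym_mat_diff sym_outer)
  fix v :: "real^'n"
  define z :: "real^('n option)" where "z = (\<chi> i. case i of None \<Rightarrow> - (x \<bullet> v) | Some k \<Rightarrow> v $ k)"
  have zt: "ztail z = v" by (simp add: z_def ztail_def vec_eq_iff)
  have zn: "z $ None = - (x \<bullet> v)" by (simp add: z_def)
  have "0 \<le> z \<bullet> (blk 1 x X *v z)" using assms by (simp add: psd_def)
  also have "\<dots> = v \<bullet> (X *v v) - (x \<bullet> v)^2" unfolding quad_blk zt zn by (simp add: power2_eq_square)
  also have "\<dots> = v \<bullet> ((X - outer x x) *v v)"
    by (simp add: matrix_vector_mult_diff_rdistrib outer_mult inner_diff_right power2_eq_square inner_commute)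
  finally show "0 \<le> v \<bullet> ((X - outer x x) *v v)" .
qed

lemma psd_blk_rank1: "psd (blk 1 (x::real^'n) (outer x x))"
  unfolding psd_def
proof (intro conjI allI)
  show "sym_mat (blk 1 x (outer x x))" by (intro sym_blk sym_outer)
  fix z :: "real^('n option)"
  have "z \<bullet> (blk 1 x (outer x x) *v z) = (z $ None + x \<bullet> ztail z)^2"
    unfolding quad_blk by (simp add: outer_mult power2_eq_square algebra_simps inner_commute)
  then show "0 \<le> z \<bullet> (blk 1 x (outer x x) *v z)" by simp
qed

lemma frob_blk_rank1: "frob (blk c b A) (blk 1 x (outer x x)) = qf A b c x"
  by (simp add: frob_blk frob_outer qf_def)

lemma frob_add: "frob (M + N) P = frob M P + frob N P"
  by (simp add: frob_def algebra_simps sum.distrib)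
lemma frob_scale: "frob (r *\<^sub>R M) P = r * frob M P"
  by (simp add: frob_def sum_distrib_left algebra_simps)
lemma frob_zero1: "frob 0 P = 0"
  by (simp add: frob_def)
lemma frob_sum: "frob (\<Sum>i\<in>S. g i *\<^sub>R M i) P = (\<Sum>i\<in>S. g i * frob (M i) P)"
  by (induction S rule: infinite_finite_induct) (auto simp: frob_add frob_scale frob_zero1)

lemma sdp_weak:
  fixes A0 :: "real^'n^'n" and A :: "'m::finite \<Rightarrow> real^'n^'n"
  assumes symA0: "sym_mat A0" and symA: "\<And>i. sym_mat (A i)"
    and X: "sym_mat X" and Y: "psd (blk 1 x X)"
    and ineq: "\<forall>i\<in>I. frob (blk (c i) (b i) (A i)) (blk 1 x X) \<le> 0"
    and eq: "\<forall>i. i \<notin> I \<longrightarrow> frob (blk (c i) (b i) (A i)) (blk 1 x X) = 0"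
    and g: "g \<in> Gam A0 A I"
  shows "qf A0 b0 c0 x + g \<bullet> svec A b c x \<le> frob (blk c0 b0 A0) (blk 1 x X)"
proof -
  define P where "P = X - outer x x"
  have psdP: "psd P" unfolding P_def by (rule psd_blk_schur[OF Y X])
  have fb: "frob (blk cc bb AA) (blk 1 x X) = qf AA bb cc x + frob AA P" for cc bb AA
    by (simp add: frob_blk P_def frob_diff frob_outer qf_def)
  have gpsd: "psd (Agam A0 A g)" and gI: "\<forall>i\<in>I. 0 \<le> g $ i" using g by (auto simp: Gam_def)
  have "qf A0 b0 c0 x + g \<bullet> svec A b c x \<le> qf A0 b0 c0 x + g \<bullet> svec A b c x + frob (Agam A0 A g) P"
    using psd_frob[OF gpsd psdP] by simp
  also have "\<dots> = frob (blk c0 b0 A0) (blk 1 x X) + (\<Sum>i\<in>UNIV. g $ i * frob (blk (c i) (b i) (A i)) (blk 1 x X))"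
    by (simp add: fb Agam_lin Alin_def frob_add frob_sum inner_vec_def svec_def sum.distrib algebra_simps)
  also have "\<dots> \<le> frob (blk c0 b0 A0) (blk 1 x X)"
  proof -
    have "g $ i * frob (blk (c i) (b i) (A i)) (blk 1 x X) \<le> 0" for i
    proof (cases "i \<in> I")
      case True then show ?thesis using gI ineq by (simp add: mult_nonneg_nonpos)
    next
      case False then show ?thesis using eq by simp
    qed
    then show ?thesis by (simp add: sum_nonpos)
  qed
  finally show ?thesis .
qed


lemma sum_regroup:
  fixes c :: "'b \<Rightarrow> real" and \<phi> :: "'b \<Rightarrow> 'a::real_vector"
  assumes "finite S"
  shows "(\<Sum>t\<in>\<phi> ` S. (\<Sum>s\<in>{s\<in>S. \<phi> s = t}. c s) *\<^sub>R t) = (\<Sum>s\<in>S. c s *\<^sub>R \<phi> s)"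
    and "(\<Sum>t\<in>\<phi> ` S. (\<Sum>s\<in>{s\<in>S. \<phi> s = t}. c s)) = (\<Sum>s\<in>S. c s)"
proof -
  have "(\<Sum>s\<in>S. c s *\<^sub>R \<phi> s) = (\<Sum>t\<in>\<phi> ` S. \<Sum>s\<in>{s\<in>S. \<phi> s = t}. c s *\<^sub>R \<phi> s)"
    by (rule sum.image_gen[OF assms])
  also have "\<dots> = (\<Sum>t\<in>\<phi> ` S. (\<Sum>s\<in>{s\<in>S. \<phi> s = t}. c s) *\<^sub>R t)"
    by (intro sum.cong refl) (auto simp: scaleR_sum_left intro!: sum.cong)
  finally show "(\<Sum>t\<in>\<phi> ` S. (\<Sum>s\<in>{s\<in>S. \<phi> s = t}. c s) *\<^sub>R t) = (\<Sum>s\<in>S. c s *\<^sub>R \<phi> s)" by simp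
  show "(\<Sum>t\<in>\<phi> ` S. (\<Sum>s\<in>{s\<in>S. \<phi> s = t}. c s)) = (\<Sum>s\<in>S. c s)"
    by (rule sum.image_gen[OF assms, symmetric])
qed

lemma polyhedron_MW:
  fixes G :: "'a::euclidean_space set"
  assumes poly: "polyhedron G" and ne: "G \<noteq> {}"
  obtains T U where "finite T" "T \<noteq> {}" "finite U" "T \<subseteq> G"
    "\<And>u g s. u \<in> U \<Longrightarrow> g \<in> G \<Longrightarrow> 0 \<le> s \<Longrightarrow> g + s *\<^sub>R u \<in> G"
    "\<And>g. g \<in> G \<Longrightarrow> \<exists>l m. (\<forall>t\<in>T. 0 \<le> l t) \<and> sum l T = 1 \<and> (\<forall>u\<in>U. 0 \<le> m u) \<and>
        g = (\<Sum>t\<in>T. l t *\<^sub>R t) + (\<Sum>u\<in>U. m u *\<^sub>R u)"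
proof -
  obtain F where F: "finite F" "G = \<Inter>F" "\<forall>h\<in>F. \<exists>a b. a \<noteq> 0 \<and> h = {x. a \<bullet> x \<le> b}"
    using poly unfolding polyhedron_def by blast
  then obtain a \<beta> where ab: "\<And>h. h \<in> F \<Longrightarrow> h = {x. a h \<bullet> x \<le> \<beta> h}" by metis
  have memG: "x \<in> G \<longleftrightarrow> (\<forall>h\<in>F. a h \<bullet> x \<le> \<beta> h)" for x
    using F(2) ab by auto
  define C :: "('a \<times> real) set" where "C = {z. 0 \<le> snd z \<and> (\<forall>h\<in>F. a h \<bullet> fst z \<le> \<beta> h * snd z)}"
  have C_eq: "C = {z. (0, -1) \<bullet> z \<le> 0} \<inter> \<Inter> ((\<lambda>h. {z. (a h, - \<beta> h) \<bullet> z \<le> 0}) ` F)"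
    by (auto simp: C_def inner_Pair[of 0 "-1" "fst _" "snd _", simplified] 
        prod.case_eq_if)
  have polyC: "polyhedron C"
    unfolding C_eq by (intro polyhedron_Int polyhedron_Inter polyhedron_halfspace_le) (auto simp: F(1) polyhedron_halfspace_le)
  define K where "K = C \<inter> cbox (- One) One"
  have "polytope K"
    unfolding polytope_eq_bounded_polyhedron K_def
    by (intro conjI polyhedron_Int polyC polyhedron_interval bounded_Int) (simp add: bounded_cbox)
  then obtain S where S: "finite S" "K = convex hull S" by (auto simp: polytope_def)
  have SC: "s \<in> C" if "s \<in> S" for s
    using that S(2) hull_subset[of S convex] K_def by blast
  define S1 where "S1 = {s\<in>S. 0 < snd s}"
  define S0 where "S0 = {s\<in>S. snd s = 0}"
  have S01: "S = S1 \<union> S0" "S1 \<inter> S0 = {}" using SC by (auto simp: S1_def S0_def C_def less_le)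
  have fin: "finite S1" "finite S0" using S(1) by (auto simp: S1_def S0_def)
  define \<phi> where "\<phi> s = (1 / snd s) *\<^sub>R fst s" for s :: "'a \<times> real"
  define T where "T = \<phi> ` S1"
  define U where "U = fst ` S0"
  have TG: "T \<subseteq> G"
  proof
    fix t assume "t \<in> T"
    then obtain s where s: "s \<in> S1" "t = \<phi> s" by (auto simp: T_def)
    then have "s \<in> C" "snd s > 0" using SC by (auto simp: S1_def)
    then show "t \<in> G" unfolding memG s(2) \<phi>_def C_def
      by (auto simp: divide_simps mult.commute)
  qed
  have rec: "g + r *\<^sub>R u \<in> G" if uU: "u \<in> U" and gG: "g \<in> G" and r0: "0 \<le> r" for u g r
  proof -
    obtain s where s: "s \<in> S0" "u = fst s" using uU unfolding U_def by blast
    then have "s \<in> C" "snd s = 0" using SC by (auto simp: S0_def)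
    then have "\<forall>h\<in>F. a h \<bullet> u \<le> 0" using s(2) by (auto simp: C_def)
    then have "\<forall>h\<in>F. a h \<bullet> (g + r *\<^sub>R u) \<le> \<beta> h"
      using gG r0 unfolding memG by (auto simp: inner_add_right) (smt (verit) mult_nonneg_nonpos)
    then show ?thesis unfolding memG .
  qed
  have decomp: "\<exists>l m. (\<forall>t\<in>T. 0 \<le> l t) \<and> sum l T = 1 \<and> (\<forall>u\<in>U. 0 \<le> m u) \<and>
        g = (\<Sum>t\<in>T. l t *\<^sub>R t) + (\<Sum>u\<in>U. m u *\<^sub>R u)" if g: "g \<in> G" for g
  proof -
    define z where "z = (g, 1::real)"
    have zC: "z \<in> C" using g by (auto simp: z_def C_def memG)
    define r where "r = norm z"
    have r: "r > 0" by (simp add: r_def z_def zero_prod_def)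
    define z' where "z' = (1/r) *\<^sub>R z"
    have "z' \<in> C"
    proof -
      have "a h \<bullet> ((1/r) *\<^sub>R g) \<le> \<beta> h * (1/r)" if "h \<in> F" for h
      proof -
        have "a h \<bullet> g \<le> \<beta> h" using g that memG by blast
        then have "(1/r) * (a h \<bullet> g) \<le> (1/r) * \<beta> h" using r by (intro mult_left_mono) auto
        then show ?thesis by (simp add: mult.commute)
      qed
      then show ?thesis using r by (simp add: z'_def z_def C_def)
    qed
    moreover have "z' \<in> cbox (- One) One"
    proof -
      have "norm z' = 1" using r by (simp add: z'_def r_def)
      then show ?thesis using Basis_le_norm[of _ z'] by (auto simp: mem_box inner_sum_Basis abs_le_iff)
    qed
    ultimately have "z' \<in> convex hull S" using S(2) K_def by blast
    then obtain w where w: "\<forall>s\<in>S. 0 \<le> w s" "sum w S = 1" "(\<Sum>s\<in>S. w s *\<^sub>R s) = z'"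
      using convex_hull_finite[OF S(1)] by auto
    define c where "c s = r * w s" for s
    have zs: "z = (\<Sum>s\<in>S. c s *\<^sub>R s)"
    proof -
      have "z = r *\<^sub>R z'" using r by (simp add: z'_def)
      also have "\<dots> = (\<Sum>s\<in>S. c s *\<^sub>R s)" by (simp add: w(3)[symmetric] scaleR_sum_right c_def)
      finally show ?thesis .
    qed
    have c0: "\<forall>s\<in>S. 0 \<le> c s" using w(1) r by (simp add: c_def)
    have g_eq: "g = (\<Sum>s\<in>S. c s *\<^sub>R fst s)" using arg_cong[OF zs, of fst] by (simp add: z_def fst_sum)
    have one_eq: "1 = (\<Sum>s\<in>S. c s * snd s)" using arg_cong[OF zs, of snd] by (simp add: z_def snd_sum)
    have split: "sum f S = sum f S1 + sum f S0" for f :: "'a \<times> real \<Rightarrow> 'x::comm_monoid_add"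
      by (metis S01 fin sum.union_disjoint)
    have z0: "(\<Sum>s\<in>S0. c s * snd s) = 0"
      by (rule sum.neutral) (simp add: S0_def)
    have one1: "(\<Sum>s\<in>S1. c s * snd s) = 1"
      using one_eq split[of "\<lambda>s. c s * snd s"] z0 by simp
    have g1: "g = (\<Sum>s\<in>S1. (c s * snd s) *\<^sub>R \<phi> s) + (\<Sum>s\<in>S0. c s *\<^sub>R fst s)"
    proof -
      have "g = (\<Sum>s\<in>S1. c s *\<^sub>R fst s) + (\<Sum>s\<in>S0. c s *\<^sub>R fst s)"
        using g_eq split[of "\<lambda>s. c s *\<^sub>R fst s"] by simp
      moreover have "(\<Sum>s\<in>S1. c s *\<^sub>R fst s) = (\<Sum>s\<in>S1. (c s * snd s) *\<^sub>R \<phi> s)"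
        by (intro sum.cong refl) (auto simp: \<phi>_def S1_def)
      ultimately show ?thesis by simp
    qed
    define l where "l t = (\<Sum>s\<in>{s\<in>S1. \<phi> s = t}. c s * snd s)" for t
    define m where "m u = (\<Sum>s\<in>{s\<in>S0. fst s = u}. c s)" for u
    have h1: "\<forall>t\<in>T. 0 \<le> l t" using c0 by (auto simp: l_def S1_def intro!: sum_nonneg)
    have h2: "\<forall>u\<in>U. 0 \<le> m u" using c0 by (auto simp: m_def S0_def intro!: sum_nonneg)
    have h3: "sum l T = 1" unfolding T_def l_def sum_regroup(2)[OF fin(1)] by (rule one1)
    have h4: "g = (\<Sum>t\<in>T. l t *\<^sub>R t) + (\<Sum>u\<in>U. m u *\<^sub>R u)"
      unfolding T_def U_def l_def m_def sum_regroup(1)[OF fin(1)] sum_regroup(1)[OF fin(2)] by (rule g1)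
    show ?thesis using h1 h2 h3 h4 by blast
  qed
  have "T \<noteq> {}"
  proof
    assume "T = {}"
    obtain g where "g \<in> G" using ne by blast
    from decomp[OF this] obtain l :: "'a \<Rightarrow> real" where "sum l T = 1" by blast
    with \<open>T = {}\<close> show False by simp
  qed
  moreover have "finite T" "finite U" using fin by (auto simp: T_def U_def)
  ultimately show ?thesis using that TG rec decomp by blast
qed


lemma sigma_lemma:
  fixes a b K :: real
  assumes "\<And>s. 0 \<le> s \<Longrightarrow> a + s * b \<le> K"
  shows "b \<le> 0"
proof (rule ccontr)
  assume "\<not> b \<le> 0"
  then have b: "b > 0" by simp
  define s where "s = (\<bar>K - a\<bar> + 1) / b"
  have "0 \<le> s" using b by (simp add: s_def)
  then have "a + s * b \<le> K" by (rule assms)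
  moreover have "s * b = \<bar>K - a\<bar> + 1" using b by (simp add: s_def)
  ultimately show False by linarith
qed

lemma ev_small:
  fixes \<alpha> p q :: real
  assumes "\<alpha> < K"
  shows "eventually (\<lambda>\<tau>. \<alpha> + 2*(-\<tau>)*p + (-\<tau>)^2*q < K) (at_right 0)"
proof -
  have "((\<lambda>\<tau>::real. \<alpha> + 2*(-\<tau>)*p + (-\<tau>)^2*q) \<longlongrightarrow> \<alpha> + 2*(-0)*p + (-0)^2*q) (at_right 0)"
    by (intro tendsto_intros)
  then have "((\<lambda>\<tau>::real. \<alpha> + 2*(-\<tau>)*p + (-\<tau>)^2*q) \<longlongrightarrow> \<alpha>) (at_right 0)" by simp
  from order_tendstoD(2)[OF this assms] show ?thesis .
qed

lemma continuous_qf: "continuous_on S (\<lambda>x. qf M \<beta> \<kappa> x)"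
  unfolding qf_def
  by (intro continuous_intros linear_continuous_on matrix_vector_mul_linear linear_linear[THEN iffD1])

lemma continuous_Max:
  fixes f :: "'t \<Rightarrow> 'a::topological_space \<Rightarrow> real"
  assumes "finite T" "T \<noteq> {}" "\<And>t. t \<in> T \<Longrightarrow> continuous_on S (f t)"
  shows "continuous_on S (\<lambda>x. Max ((\<lambda>t. f t x) ` T))"
  using assms
proof (induction T rule: finite_ne_induct)
  case (singleton t) then show ?case by simp
next
  case (insert t T)
  have "continuous_on S (\<lambda>x. max (f t x) (Max ((\<lambda>t. f t x) ` T)))"
  proof (rule continuous_on_max)
    show "continuous_on S (f t)" using insert.prems by simp
    show "continuous_on S (\<lambda>x. Max ((\<lambda>t. f t x) ` T))" using insert.IH insert.prems by simp
  qed
  moreover have "Max ((\<lambda>t. f t x) ` insert t T) = max (f t x) (Max ((\<lambda>t. f t x) ` T))" for x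
    using insert by (simp add: Max_insert)
  ultimately show ?case by simp
qed

lemma proj_char:
  fixes V :: "'a::euclidean_space set"
  assumes "subspace V"
  shows "proj V x \<in> V \<and> (\<forall>w\<in>V. (x - proj V x) \<bullet> w = 0)"
proof -
  obtain y z where yz: "y \<in> span V" "\<And>w. w \<in> span V \<Longrightarrow> orthogonal z w" "x = y + z"
    using orthogonal_subspace_decomp_exists by blast
  have sp: "span V = V" using assms by (simp add: span_eq_iff)
  have ex: "y \<in> V \<and> (\<forall>w\<in>V. (x - y) \<bullet> w = 0)" using yz sp by (auto simp: orthogonal_def)
  have uniq: "p = y" if "p \<in> V \<and> (\<forall>w\<in>V. (x - p) \<bullet> w = 0)" for p
  proof -
    have d: "p - y \<in> V" using that ex assms by (simp add: subspace_diff)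
    have "(p - y) \<bullet> (p - y) = (x - y) \<bullet> (p - y) - (x - p) \<bullet> (p - y)" by (simp add: algebra_simps inner_diff_left)
    also have "\<dots> = 0" using that ex d by simp
    finally show ?thesis by simp
  qed
  show ?thesis unfolding proj_def
    by (rule theI[where a=y]) (use ex uniq in blast)+
qed

lemma proj_unique:
  fixes V :: "'a::euclidean_space set"
  assumes "subspace V" "p \<in> V" "\<forall>w\<in>V. (x - p) \<bullet> w = 0"
  shows "proj V x = p"
proof -
  have c: "proj V x \<in> V" "\<forall>w\<in>V. (x - proj V x) \<bullet> w = 0" using proj_char[OF assms(1)] by auto
  have d: "p - proj V x \<in> V" using assms c by (simp add: subspace_diff)
  have "(p - proj V x) \<bullet> (p - proj V x) = (x - proj V x) \<bullet> (p - proj V x) - (x - p) \<bullet> (p - proj V x)"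
    by (simp add: algebra_simps inner_diff_left)
  also have "\<dots> = 0" using assms c d by simp
  finally show ?thesis by simp
qed

lemma proj_add:
  fixes V :: "'a::euclidean_space set"
  assumes "subspace V"
  shows "proj V (x + y) = proj V x + proj V y"
  using proj_char[OF assms, of x] proj_char[OF assms, of y] assms
  by (intro proj_unique) (auto simp: subspace_add inner_diff_left inner_add_left algebra_simps)

lemma proj_scale:
  fixes V :: "'a::euclidean_space set"
  assumes "subspace V"
  shows "proj V (r *\<^sub>R x) = r *\<^sub>R proj V x"
proof (rule proj_unique[OF assms])
  show "r *\<^sub>R proj V x \<in> V" using proj_char[OF assms, of x] assms by (simp add: subspace_scale)
  show "\<forall>w\<in>V. (r *\<^sub>R x - r *\<^sub>R proj V x) \<bullet> w = 0"
    using proj_char[OF assms, of x] by (simp add: scaleR_diff_right[symmetric])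
qed

lemma proj_sym:
  fixes V :: "'a::euclidean_space set"
  assumes "subspace V"
  shows "proj V a \<bullet> y = a \<bullet> proj V y"
proof -
  have 1: "proj V a \<bullet> y = proj V a \<bullet> proj V y"
  proof -
    have "(y - proj V y) \<bullet> proj V a = 0" using proj_char[OF assms, of y] proj_char[OF assms, of a] by simp
    then have "proj V a \<bullet> y - proj V a \<bullet> proj V y = 0" by (simp add: inner_diff_left inner_diff_right inner_commute)
    then show ?thesis by simp
  qed
  have 2: "a \<bullet> proj V y = proj V a \<bullet> proj V y"
  proof -
    have "(a - proj V a) \<bullet> proj V y = 0" using proj_char[OF assms, of y] proj_char[OF assms, of a] by simp
    then show ?thesis by (simp add: inner_diff_left)
  qed
  show ?thesis using 1 2 by simp
qed

lemma subspace_Vsp: "subspace (Vsp A0 A F)"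
  unfolding subspace_def Vsp_def
  by (auto simp: matrix_vector_right_distrib mv_scaleR)


lemma pd_psd: "pd M \<Longrightarrow> psd M"
  unfolding pd_def psd_def by (metis inner_zero_left order_le_less)

lemma qf_lower:
  assumes "\<And>v. l * (norm v)^2 \<le> v \<bullet> (M *v v)"
  shows "l * (norm x)^2 - 2 * norm \<beta> * norm x + \<kappa> \<le> qf M \<beta> \<kappa> x"
proof -
  have "- (norm \<beta> * norm x) \<le> \<beta> \<bullet> x" using Cauchy_Schwarz_ineq2[of \<beta> x] by linarith
  then show ?thesis using assms[of x] unfolding qf_def by linarith
qed

lemma radius_bound:
  fixes l B r \<kappa> C :: real
  assumes "l > 0" "0 \<le> B" "0 \<le> r" "l * r^2 - 2 * B * r + \<kappa> \<le> C"
  shows "r \<le> max 1 ((2 * B + \<bar>C - \<kappa>\<bar>) / l)"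
proof (cases "r \<le> 1")
  case True then show ?thesis by simp
next
  case False
  then have r1: "r > 1" by simp
  have "l * r^2 \<le> (2 * B + \<bar>C - \<kappa>\<bar>) * r"
  proof -
    have "l * r^2 \<le> C - \<kappa> + 2 * B * r" using assms(4) by linarith
    also have "\<dots> \<le> \<bar>C - \<kappa>\<bar> * r + 2 * B * r" using r1 by (smt (verit) mult_le_cancel_left1 abs_ge_self abs_ge_zero)
    finally show ?thesis by (simp add: algebra_simps)
  qed
  then have "l * r \<le> 2 * B + \<bar>C - \<kappa>\<bar>" using r1 by (simp add: power2_eq_square mult.assoc[symmetric])
  then have "r \<le> (2 * B + \<bar>C - \<kappa>\<bar>) / l" using assms(1) by (simp add: field_simps)
  then show ?thesis by simp
qed

lemma Alin_axis: "Alin A (axis i 1) = A i"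
proof -
  have "Alin A (axis i 1) = (\<Sum>j\<in>UNIV. (if j = i then A j else 0))"
    unfolding Alin_def by (intro sum.cong) (auto simp: axis_def)
  then show ?thesis by simp
qed

definition sdpok :: "('m::finite) set \<Rightarrow> ('m \<Rightarrow> real^'n^'n) \<Rightarrow> ('m \<Rightarrow> real^'n) \<Rightarrow> ('m \<Rightarrow> real) \<Rightarrow> real^'n \<Rightarrow> real^'n^'n \<Rightarrow> bool" where
  "sdpok I A b c x X \<longleftrightarrow> sym_mat X \<and> psd (blk 1 x X) \<and>
      (\<forall>i\<in>I. frob (blk (c i) (b i) (A i)) (blk 1 x X) \<le> 0) \<and>
      (\<forall>i. i \<notin> I \<longrightarrow> frob (blk (c i) (b i) (A i)) (blk 1 x X) = 0)"

locale qc =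
  fixes A0 :: "real^'n^'n" and A :: "'m::finite \<Rightarrow> real^'n^'n" and b :: "'m \<Rightarrow> real^'n"
    and c :: "'m \<Rightarrow> real" and c0 :: real and I :: "'m set" and gs :: "real^'m"
  assumes symA0: "sym_mat A0" and symA: "\<And>i. sym_mat (A i)"
    and polyG: "polyhedron (Gam A0 A I)"
    and gsI: "\<forall>i\<in>I. 0 \<le> gs $ i" and gspd: "pd (Agam A0 A gs)"
begin

definition L :: "real^'n \<Rightarrow> real^'m \<Rightarrow> real^'n \<Rightarrow> real" where
  "L bb g x = qf A0 bb c0 x + g \<bullet> svec A b c x"

lemma L_qf: "L bb g x = qf (Agam A0 A g) (bgam bb b g) (c0 + clin c g) x"
  by (simp add: L_def qf_gam)

lemma gs_G: "gs \<in> Gam A0 A I"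
  using gsI gspd by (simp add: Gam_def pd_psd)

lemma convexG: "convex (Gam A0 A I)"
  by (rule polyhedron_imp_convex[OF polyG])

lemma feas_nonpos:
  assumes "x \<in> qcqp_feas I A b c" "g \<in> Gam A0 A I"
  shows "g \<bullet> svec A b c x \<le> 0"
proof -
  have "g $ i * svec A b c x $ i \<le> 0" for i
  proof (cases "i \<in> I")
    case True
    then have "0 \<le> g $ i" "svec A b c x $ i \<le> 0" using assms by (auto simp: Gam_def qcqp_feas_def svec_def)
    then show ?thesis by (simp add: mult_nonneg_nonpos)
  next
    case False
    then show ?thesis using assms by (auto simp: qcqp_feas_def svec_def)
  qed
  then show ?thesis by (simp add: inner_vec_def sum_nonpos)
qed

lemma sdp_L:
  assumes "sdpok I A b c x X" "g \<in> Gam A0 A I"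
  shows "L bb g x \<le> frob (blk c0 bb A0) (blk 1 x X)"
  using assms unfolding sdpok_def L_def by (intro sdp_weak[OF symA0 symA]) auto

lemma L_coercive:
  "\<exists>l>0. \<forall>bb x. l * (norm x)^2 - 2 * norm (bgam bb b gs) * norm x + (c0 + clin c gs) \<le> L bb gs x"
proof -
  obtain l where l: "l > 0" "\<And>v. l * (norm v)^2 \<le> v \<bullet> (Agam A0 A gs *v v)"
    using pd_coercive[OF gspd] by blast
  have "l * (norm x)^2 - 2 * norm (bgam bb b gs) * norm x + (c0 + clin c gs) \<le> L bb gs x" for bb x
    unfolding L_qf by (rule qf_lower[OF l(2)])
  then show ?thesis using l(1) by blast
qed

definition MWrep :: "(real^'m) set \<Rightarrow> (real^'m) set \<Rightarrow> bool" where
  "MWrep T U \<longleftrightarrow> finite T \<and> T \<noteq> {} \<and> finite U \<and> T \<subseteq> Gam A0 A I \<and>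
    (\<forall>u g s. u \<in> U \<longrightarrow> g \<in> Gam A0 A I \<longrightarrow> 0 \<le> s \<longrightarrow> g + s *\<^sub>R u \<in> Gam A0 A I) \<and>
    (\<forall>g\<in>Gam A0 A I. \<exists>l m. (\<forall>t\<in>T. 0 \<le> l t) \<and> sum l T = 1 \<and> (\<forall>u\<in>U. 0 \<le> m u) \<and>
        g = (\<Sum>t\<in>T. l t *\<^sub>R t) + (\<Sum>u\<in>U. m u *\<^sub>R u))"

lemma MW_ex: "\<exists>T U. MWrep T U"
proof -
  have ne: "Gam A0 A I \<noteq> {}" using gs_G by blast
  show ?thesis
  proof (rule polyhedron_MW[OF polyG ne])
    fix T U
    assume h: "finite T" "T \<noteq> {}" "finite U" "T \<subseteq> Gam A0 A I"
      "\<And>u g s. u \<in> U \<Longrightarrow> g \<in> Gam A0 A I \<Longrightarrow> 0 \<le> s \<Longrightarrow> g + s *\<^sub>R u \<in> Gam A0 A I"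
      "\<And>g. g \<in> Gam A0 A I \<Longrightarrow> \<exists>l m. (\<forall>t\<in>T. 0 \<le> l t) \<and> sum l T = 1 \<and> (\<forall>u\<in>U. 0 \<le> m u) \<and>
        g = (\<Sum>t\<in>T. l t *\<^sub>R t) + (\<Sum>u\<in>U. m u *\<^sub>R u)"
    have "MWrep T U" unfolding MWrep_def
    proof (intro conjI allI impI ballI)
      show "finite T" "T \<noteq> {}" "finite U" "T \<subseteq> Gam A0 A I" by (fact h)+
      show "g + s *\<^sub>R u \<in> Gam A0 A I" if "u \<in> U" "g \<in> Gam A0 A I" "0 \<le> s" for u g s using h(5) that .
      show "\<exists>l m. (\<forall>t\<in>T. 0 \<le> l t) \<and> sum l T = 1 \<and> (\<forall>u\<in>U. 0 \<le> m u) \<and>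
          g = (\<Sum>t\<in>T. l t *\<^sub>R t) + (\<Sum>u\<in>U. m u *\<^sub>R u)" if "g \<in> Gam A0 A I" for g using h(6) that .
    qed
    then show "\<exists>T U. MWrep T U" by blast
  qed
qed

lemma F1:
  assumes MW: "MWrep T U" and g: "g \<in> Gam A0 A I" and xD: "\<forall>u\<in>U. u \<bullet> svec A b c x \<le> 0"
  shows "L bb g x \<le> Max ((\<lambda>t. L bb t x) ` T)"
proof -
  have fin: "finite T" "T \<noteq> {}" "finite U" using MW by (auto simp: MWrep_def)
  obtain l m where lm: "\<forall>t\<in>T. 0 \<le> l t" "sum l T = 1" "\<forall>u\<in>U. 0 \<le> m u"
    "g = (\<Sum>t\<in>T. l t *\<^sub>R t) + (\<Sum>u\<in>U. m u *\<^sub>R u)"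
    using MW g unfolding MWrep_def by blast
  define s where "s = svec A b c x"
  define M where "M = Max ((\<lambda>t. L bb t x) ` T)"
  have "g \<bullet> s = (\<Sum>t\<in>T. l t * (t \<bullet> s)) + (\<Sum>u\<in>U. m u * (u \<bullet> s))"
    by (simp add: lm(4) inner_add_left inner_sum_left)
  moreover have "(\<Sum>u\<in>U. m u * (u \<bullet> s)) \<le> 0"
    using lm(3) xD by (auto simp: s_def intro!: sum_nonpos mult_nonneg_nonpos)
  moreover have "L bb g x = qf A0 bb c0 x + g \<bullet> s" unfolding L_def s_def ..
  ultimately have "L bb g x \<le> qf A0 bb c0 x + (\<Sum>t\<in>T. l t * (t \<bullet> s))"
    by linarith
  also have "\<dots> = (\<Sum>t\<in>T. l t * qf A0 bb c0 x) + (\<Sum>t\<in>T. l t * (t \<bullet> s))"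
  proof -
    have "(\<Sum>t\<in>T. l t * qf A0 bb c0 x) = (\<Sum>t\<in>T. l t) * qf A0 bb c0 x" by (rule sum_distrib_right[symmetric])
    then show ?thesis using lm(2) by simp
  qed
  also have "\<dots> = (\<Sum>t\<in>T. l t * L bb t x)"
    by (simp add: L_def s_def distrib_left sum.distrib)
  also have "\<dots> \<le> (\<Sum>t\<in>T. l t * M)"
  proof (rule sum_mono)
    fix t assume "t \<in> T"
    then have "L bb t x \<le> M" unfolding M_def using fin by (intro Max_ge) auto
    then show "l t * L bb t x \<le> l t * M" using lm(1) \<open>t \<in> T\<close> by (intro mult_left_mono) auto
  qed
  also have "\<dots> = (\<Sum>t\<in>T. l t) * M" by (rule sum_distrib_right[symmetric])
  also have "\<dots> = M" using lm(2) by simp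
  finally show ?thesis by (simp add: M_def)
qed

end


context qc begin

lemma core:
  fixes bb :: "real^'n"
  assumes hyp: "\<And>F. semidef_face A0 A I F \<Longrightarrow> \<forall>g\<in>F. proj (Vsp A0 A F) (bgam bb b g) \<noteq> 0"
    and x0: "x0 \<in> qcqp_feas I A b c"
  shows "\<exists>xh\<in>qcqp_feas I A b c. (\<forall>x X. sdpok I A b c x X \<longrightarrow> qf A0 bb c0 xh \<le> frob (blk c0 bb A0) (blk 1 x X))
            \<and> L bb gs xh \<le> qf A0 bb c0 x0"
proof -
  obtain T U where MW: "MWrep T U" using MW_ex by blast
  have finT: "finite T" "T \<noteq> {}" and finU: "finite U" and TG: "T \<subseteq> Gam A0 A I"
    and recG: "\<And>u g s. u \<in> U \<Longrightarrow> g \<in> Gam A0 A I \<Longrightarrow> 0 \<le> s \<Longrightarrow> g + s *\<^sub>R u \<in> Gam A0 A I"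
    using MW unfolding MWrep_def by blast+
  define \<phi> where "\<phi> x = Max ((\<lambda>t. L bb t x) ` T)" for x
  define D where "D = {x. \<forall>u\<in>U. u \<bullet> svec A b c x \<le> 0}"
  have F1': "L bb g x \<le> \<phi> x" if "g \<in> Gam A0 A I" "x \<in> D" for g x
    using F1[OF MW that(1)] that(2) by (simp add: \<phi>_def D_def)
  have Tle: "L bb t x \<le> \<phi> x" if "t \<in> T" for t x
    unfolding \<phi>_def using finT that by (intro Max_ge) auto
  have Lshift: "L bb (g + s *\<^sub>R u) x = L bb g x + s * (u \<bullet> svec A b c x)" for g u s x
    by (simp add: L_def inner_add_left)
  have feasD: "x \<in> D \<and> \<phi> x \<le> qf A0 bb c0 x" if xf: "x \<in> qcqp_feas I A b c" for x
  proof
    show "x \<in> D" unfolding D_def mem_Collect_eq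
    proof (rule ballI)
      fix u assume u: "u \<in> U"
      have "gs \<bullet> svec A b c x + s * (u \<bullet> svec A b c x) \<le> 0" if "0 \<le> s" for s
        using feas_nonpos[OF xf recG[OF u gs_G that]] by (simp add: inner_add_left)
      then show "u \<bullet> svec A b c x \<le> 0" by (rule sigma_lemma)
    qed
    show "\<phi> x \<le> qf A0 bb c0 x"
      unfolding \<phi>_def using finT TG feas_nonpos[OF xf] by (subst Max_le_iff) (auto simp: L_def)
  qed
  have sdpD: "x \<in> D \<and> \<phi> x \<le> frob (blk c0 bb A0) (blk 1 x X)" if ok: "sdpok I A b c x X" for x X
  proof
    show "x \<in> D" unfolding D_def mem_Collect_eq
    proof (rule ballI)
      fix u assume u: "u \<in> U"
      have "L bb gs x + s * (u \<bullet> svec A b c x) \<le> frob (blk c0 bb A0) (blk 1 x X)" if "0 \<le> s" for s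
        using sdp_L[OF ok recG[OF u gs_G that], of bb] by (simp add: Lshift)
      then show "u \<bullet> svec A b c x \<le> 0" by (rule sigma_lemma)
    qed
    show "\<phi> x \<le> frob (blk c0 bb A0) (blk 1 x X)"
      unfolding \<phi>_def using finT TG sdp_L[OF ok] by (subst Max_le_iff) auto
  qed
  have contL: "continuous_on S (L bb g)" for S g
    unfolding L_qf[abs_def] by (rule continuous_qf)
  have contphi: "continuous_on S \<phi>" for S
    unfolding \<phi>_def[abs_def] using finT by (intro continuous_Max contL) auto
  have closedD: "closed D"
  proof -
    have "D = (\<Inter>u\<in>U. {x. u \<bullet> svec A b c x \<le> 0})" by (auto simp: D_def)
    moreover have "closed {x. u \<bullet> svec A b c x \<le> 0}" for u
    proof -
      have "continuous_on UNIV (\<lambda>x. u \<bullet> svec A b c x)"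
        unfolding qf_lin[symmetric] by (rule continuous_qf)
      then show ?thesis using closed_Collect_le[of "\<lambda>x. u \<bullet> svec A b c x" "\<lambda>x. 0"] by simp
    qed
    ultimately show ?thesis by (auto intro!: closed_INT)
  qed
  obtain l where l: "l > 0" "\<And>x. l * (norm x)^2 - 2 * norm (bgam bb b gs) * norm x + (c0 + clin c gs) \<le> L bb gs x"
    using L_coercive by blast
  define K where "K = D \<inter> {x. L bb gs x \<le> \<phi> x0}"
  have x0D: "x0 \<in> D" "\<phi> x0 \<le> qf A0 bb c0 x0" using feasD[OF x0] by auto
  have x0K: "x0 \<in> K" using x0D F1'[OF gs_G x0D(1)] by (simp add: K_def)
  have compK: "compact K"
  proof -
    have "closed {x. L bb gs x \<le> \<phi> x0}"
      using closed_Collect_le[of "L bb gs" "\<lambda>x. \<phi> x0"] contL by simp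
    then have "closed K" using closedD by (simp add: K_def closed_Int)
    moreover have "bounded K"
      unfolding bounded_iff
    proof (intro exI ballI)
      fix x assume "x \<in> K"
      then have "l * (norm x)^2 - 2 * norm (bgam bb b gs) * norm x + (c0 + clin c gs) \<le> \<phi> x0"
        using l(2)[of x] by (simp add: K_def)
      then show "norm x \<le> max 1 ((2 * norm (bgam bb b gs) + \<bar>\<phi> x0 - (c0 + clin c gs)\<bar>) / l)"
        by (intro radius_bound l(1)) auto
    qed
    ultimately show ?thesis by (simp add: compact_eq_bounded_closed)
  qed
  obtain xh where xhK: "xh \<in> K" and xhmin: "\<forall>y\<in>K. \<phi> xh \<le> \<phi> y"
    using continuous_attains_inf[OF compK _ contphi] x0K by blast
  have xhD: "xh \<in> D" using xhK by (simp add: K_def)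
  have hmin: "\<phi> xh \<le> \<phi> y" if "y \<in> D" for y
  proof (cases "y \<in> K")
    case True then show ?thesis using xhmin by blast
  next
    case False
    then have "\<phi> x0 < L bb gs y" using that by (simp add: K_def)
    also have "\<dots> \<le> \<phi> y" by (rule F1'[OF gs_G that])
    finally show ?thesis using xhmin x0K by force
  qed
  have second: "L bb gs xh \<le> qf A0 bb c0 x0"
    using F1'[OF gs_G xhD] hmin[OF x0D(1)] x0D(2) by linarith
  define sx where "sx = svec A b c xh"
  define Fc where "Fc = Gam A0 A I \<inter> {g. sx \<bullet> g = \<phi> xh - qf A0 bb c0 xh}"
  have memF: "g \<in> Fc \<longleftrightarrow> g \<in> Gam A0 A I \<and> L bb g xh = \<phi> xh" for g
    by (auto simp: Fc_def L_def sx_def inner_commute)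
  have faceF: "Fc face_of Gam A0 A I"
    unfolding Fc_def
  proof (rule face_of_Int_supporting_hyperplane_le[OF convexG])
    fix g assume "g \<in> Gam A0 A I"
    then have "L bb g xh \<le> \<phi> xh" using F1'[OF _ xhD] by blast
    then show "sx \<bullet> g \<le> \<phi> xh - qf A0 bb c0 xh" by (simp add: L_def sx_def inner_commute)
  qed
  obtain t0 where t0: "t0 \<in> T" "L bb t0 xh = \<phi> xh"
  proof -
    have "\<phi> xh \<in> (\<lambda>t. L bb t xh) ` T" unfolding \<phi>_def using finT by (intro Max_in) auto
    then obtain t where "t \<in> T" "\<phi> xh = L bb t xh" by blast
    then show ?thesis using that by simp
  qed
  have t0F: "t0 \<in> Fc" using t0 TG memF by blast
  have sxD: "\<forall>u\<in>U. u \<bullet> sx \<le> 0" using xhD by (simp add: D_def sx_def)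
  show ?thesis
  proof (cases "\<exists>gb\<in>Fc. pd (Agam A0 A gb)")
    case True
    then obtain gb where gbF: "gb \<in> Fc" and gbpd: "pd (Agam A0 A gb)" by blast
    have gbG: "gb \<in> Gam A0 A I" and Lgb: "L bb gb xh = \<phi> xh" using gbF memF by auto
    have coord: "sx $ i \<le> 0 \<and> ((i \<notin> I \<or> 0 < gb $ i) \<longrightarrow> 0 \<le> sx $ i)" for i
    proof -
      obtain e where e: "e > 0" "\<And>s. \<bar>s\<bar> < e \<Longrightarrow> pd (Agam A0 A gb + s *\<^sub>R A i)"
        using pd_perturb[OF gbpd symA[of i]] by blast
      have inG: "gb + s *\<^sub>R axis i 1 \<in> Gam A0 A I" if "\<bar>s\<bar> < e" "i \<in> I \<longrightarrow> 0 \<le> gb $ i + s" for s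
      proof -
        have "Agam A0 A (gb + s *\<^sub>R axis i 1) = Agam A0 A gb + s *\<^sub>R A i"
          by (simp add: Agam_lin Alin_add Alin_scale Alin_axis)
        then have "psd (Agam A0 A (gb + s *\<^sub>R axis i 1))" using e(2)[OF that(1)] by (simp add: pd_psd)
        moreover have "\<forall>j\<in>I. 0 \<le> (gb + s *\<^sub>R axis i 1) $ j"
          using gbG that(2) by (auto simp: Gam_def axis_def)
        ultimately show ?thesis by (simp add: Gam_def)
      qed
      have ineq: "s * sx $ i \<le> 0" if "\<bar>s\<bar> < e" "i \<in> I \<longrightarrow> 0 \<le> gb $ i + s" for s
      proof -
        have "L bb (gb + s *\<^sub>R axis i 1) xh \<le> \<phi> xh" by (rule F1'[OF inG[OF that] xhD])
        moreover have "L bb (gb + s *\<^sub>R axis i 1) xh = L bb gb xh + s * sx $ i"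
          by (simp add: Lshift sx_def inner_axis inner_commute[of "axis i 1"])
        ultimately show ?thesis using Lgb by simp
      qed
      have "(e/2) * sx $ i \<le> 0" using e(1) gbG by (intro ineq) (auto simp: Gam_def)
      then have le: "sx $ i \<le> 0" using e(1) by (simp add: mult_le_0_iff)
      moreover have "0 \<le> sx $ i" if "i \<notin> I \<or> 0 < gb $ i"
      proof -
        define s where "s = - (if i \<in> I then min (e/2) (gb $ i) else e/2)"
        have s: "s < 0" "\<bar>s\<bar> < e" "i \<in> I \<longrightarrow> 0 \<le> gb $ i + s" using that e(1) by (auto simp: s_def)
        have "s * sx $ i \<le> 0" using s by (intro ineq) auto
        then show ?thesis using s(1) by (simp add: mult_le_0_iff)
      qed
      ultimately show ?thesis by blast
    qed
    have xhfeas: "xh \<in> qcqp_feas I A b c"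
      using coord by (auto simp: qcqp_feas_def sx_def svec_def) (metis order_antisym)+
    have "gb \<bullet> sx = 0"
    proof -
      have z: "gb $ i * sx $ i = 0" for i
      proof (cases "i \<in> I")
        case True
        then have "0 \<le> gb $ i" using gbG by (simp add: Gam_def)
        then show ?thesis using coord[of i] by (cases "gb $ i = 0") auto
      next
        case False then show ?thesis using coord[of i] by auto
      qed
      have "gb \<bullet> sx = (\<Sum>i\<in>UNIV. gb $ i * sx $ i)" by (simp add: inner_vec_def)
      also have "\<dots> = 0" by (rule sum.neutral) (use z in blast)
      finally show ?thesis .
    qed
    then have "qf A0 bb c0 xh = \<phi> xh" using Lgb by (simp add: L_def sx_def)
    then have "\<forall>x X. sdpok I A b c x X \<longrightarrow> qf A0 bb c0 xh \<le> frob (blk c0 bb A0) (blk 1 x X)"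
      using sdpD hmin by (metis order_trans)
    then show ?thesis using xhfeas second by blast
  next
    case False
    have nopd: "\<forall>g\<in>Fc. \<not> pd (Agam A0 A g)" using False by blast
    have sdf: "semidef_face A0 A I Fc" unfolding semidef_face_def using t0F faceF nopd by blast
    define V where "V = Vsp A0 A Fc"
    have subV: "subspace V" by (simp add: V_def subspace_Vsp)
    have hypF: "\<forall>g\<in>Fc. proj V (bgam bb b g) \<noteq> 0" using hyp[OF sdf] by (simp add: V_def)
    define TF where "TF = {t\<in>T. L bb t xh = \<phi> xh}"
    define UF where "UF = {u\<in>U. u \<bullet> sx = 0}"
    have TFF: "TF \<subseteq> Fc" using TG memF by (auto simp: TF_def)
    have t0TF: "t0 \<in> TF" using t0 by (simp add: TF_def)
    have finTF: "finite TF" using finT by (simp add: TF_def)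
    have finUF: "finite UF" using finU by (simp add: UF_def)
    have recF: "g + s *\<^sub>R u \<in> Fc" if g: "g \<in> Fc" and u: "u \<in> UF" and s: "0 \<le> s" for g u s
    proof -
      have "g \<in> Gam A0 A I" "L bb g xh = \<phi> xh" using g memF by auto
      moreover have "u \<in> U" "u \<bullet> sx = 0" using u by (auto simp: UF_def)
      ultimately show ?thesis using recG[OF _ _ s] by (simp add: memF Lshift sx_def)
    qed
    define Pb where "Pb g = proj V (bgam bb b g)" for g
    define Pl where "Pl u = proj V (blin b u)" for u
    have Pb_shift: "Pb (g + s *\<^sub>R u) = Pb g + s *\<^sub>R Pl u" for g s u
      by (simp add: Pb_def Pl_def bgam_lin blin_add blin_scale proj_add[OF subV] proj_scale[OF subV] add.assoc)
    define S where "S = Pb ` Fc"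
    have linPl: "linear Pl"
      unfolding linear_iff Pl_def by (simp add: blin_add blin_scale proj_add[OF subV] proj_scale[OF subV])
    have S_eq: "S = (+) (proj V bb) ` (Pl ` Fc)"
      by (auto simp: S_def Pb_def Pl_def bgam_lin proj_add[OF subV] image_image)
    have convS: "convex S" unfolding S_eq
      by (intro convex_translation convex_linear_image linPl face_of_imp_convex[OF faceF])
    have zS: "0 \<notin> S" using hypF by (auto simp: S_def Pb_def)
    define PT where "PT = Pb ` TF"
    define PU where "PU = Pl ` UF"
    define R where "R = {d. \<forall>s\<in>S. \<forall>\<sigma>\<ge>0. s + \<sigma> *\<^sub>R d \<in> S}"
    have coneR: "convex_cone R"
      unfolding convex_cone_def
    proof (intro conjI)
      show "R \<noteq> {}" by (auto simp: R_def intro!: exI[of _ 0])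
      show "conic R" unfolding conic_def R_def
      proof (intro allI impI ballI, clarify)
        fix x s :: "real^'n" and cc \<sigma> :: real
        assume "\<forall>s\<in>S. \<forall>\<sigma>\<ge>0. s + \<sigma> *\<^sub>R x \<in> S" "0 \<le> cc" "s \<in> S" "0 \<le> \<sigma>"
        then show "s + \<sigma> *\<^sub>R cc *\<^sub>R x \<in> S" by (metis scaleR_scaleR zero_le_mult_iff)
      qed
      show "convex R"
      proof (rule convexI)
        fix x y :: "real^'n" and u w :: real
        assume x: "x \<in> R" and y: "y \<in> R" and u: "0 \<le> u" and w: "0 \<le> w" and uw: "u + w = 1"
        show "u *\<^sub>R x + w *\<^sub>R y \<in> R" unfolding R_def mem_Collect_eq
        proof (intro ballI allI impI)
          fix s \<sigma> assume s: "s \<in> S" and \<sigma>: "0 \<le> (\<sigma>::real)"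
          have 1: "s + \<sigma> *\<^sub>R x \<in> S" and 2: "s + \<sigma> *\<^sub>R y \<in> S" using x y s \<sigma> by (auto simp: R_def)
          have ss: "u *\<^sub>R s + w *\<^sub>R s = s" using uw by (metis scaleR_add_left scaleR_one)
          have "s + \<sigma> *\<^sub>R (u *\<^sub>R x + w *\<^sub>R y) = u *\<^sub>R (s + \<sigma> *\<^sub>R x) + w *\<^sub>R (s + \<sigma> *\<^sub>R y)"
            using ss by (simp add: algebra_simps)
          then show "s + \<sigma> *\<^sub>R (u *\<^sub>R x + w *\<^sub>R y) \<in> S"
            using convexD[OF convS 1 2 u w uw] by simp
        qed
      qed
    qed
    have PUR: "PU \<subseteq> R"
    proof
      fix d assume "d \<in> PU"
      then obtain u where u: "u \<in> UF" "d = Pl u" by (auto simp: PU_def)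
      show "d \<in> R" unfolding R_def mem_Collect_eq
      proof (intro ballI allI impI)
        fix s \<sigma> assume "s \<in> S" and \<sigma>: "0 \<le> (\<sigma>::real)"
        then obtain g where g: "g \<in> Fc" "s = Pb g" by (auto simp: S_def)
        have "s + \<sigma> *\<^sub>R d = Pb (g + \<sigma> *\<^sub>R u)" by (simp add: g u Pb_shift)
        then show "s + \<sigma> *\<^sub>R d \<in> S" using recF[OF g(1) u(1) \<sigma>] by (simp add: S_def)
      qed
    qed
    have coneSub: "convex_cone hull PU \<subseteq> R" by (rule hull_minimal[where S=convex_cone, OF PUR coneR])
    have convSub: "convex hull PT \<subseteq> S"
      by (rule hull_minimal[where S=convex, OF _ convS]) (use TFF in \<open>auto simp: PT_def S_def\<close>)
    define W where "W = (\<Union>x\<in>convex hull PT. \<Union>y\<in>convex_cone hull PU. {x + y})"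
    have WS: "W \<subseteq> S"
    proof
      fix w assume "w \<in> W"
      then obtain x y where xy: "x \<in> convex hull PT" "y \<in> convex_cone hull PU" "w = x + y" by (auto simp: W_def)
      have "x \<in> S" "y \<in> R" using xy convSub coneSub by auto
      then have "x + 1 *\<^sub>R y \<in> S" unfolding R_def by (metis (no_types, lifting) mem_Collect_eq zero_le_one)
      then show "w \<in> S" using xy by simp
    qed
    have closedW: "closed W" unfolding W_def
      by (rule compact_closed_sums[OF finite_imp_compact_convex_hull closed_convex_cone_hull])
         (use finTF finUF in \<open>auto simp: PT_def PU_def\<close>)
    have convW: "convex W" unfolding W_def
      by (rule convex_sums[OF convex_convex_hull convex_convex_cone_hull])
    have zW: "0 \<notin> W" using WS zS by blast
    obtain a \<beta> where ab: "a \<bullet> 0 < \<beta>" "\<forall>w\<in>W. \<beta> < a \<bullet> w"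
      using separating_hyperplane_closed_point[OF convW closedW zW] by blast
    have \<beta>0: "0 < \<beta>" using ab(1) by simp
    define v where "v = proj V a"
    have vV: "v \<in> V" using proj_char[OF subV] by (simp add: v_def)
    have vsym: "v \<bullet> y = a \<bullet> proj V y" for y by (simp add: v_def proj_sym[OF subV])
    have Av: "Agam A0 A g *v v = 0" if "g \<in> Fc" for g using vV that by (simp add: V_def Vsp_def)
    have inW: "Pb t + s *\<^sub>R Pl u \<in> W" if t: "t \<in> TF" and u: "u \<in> UF" and s: "0 \<le> s" for t u s
    proof -
      have "Pb t \<in> convex hull PT" using t by (auto simp: PT_def intro: hull_inc)
      moreover have "s *\<^sub>R Pl u \<in> convex_cone hull PU"
      proof -
        have "Pl u \<in> convex_cone hull PU" using u by (auto simp: PU_def intro: hull_inc)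
        then show ?thesis using conic_convex_cone_hull s unfolding conic_def by blast
      qed
      ultimately show ?thesis by (auto simp: W_def)
    qed
    have inW0: "Pb t \<in> W" if t: "t \<in> TF" for t
    proof -
      have "Pb t \<in> convex hull PT" using t by (auto simp: PT_def intro: hull_inc)
      moreover have "0 \<in> convex_cone hull PU" by (rule convex_cone_hull_contains_0)
      ultimately show ?thesis unfolding W_def by force
    qed
    have posT: "0 < v \<bullet> bgam bb b t" if "t \<in> TF" for t
    proof -
      have "\<beta> < a \<bullet> Pb t" using ab(2) inW0[OF that] by blast
      then show ?thesis using \<beta>0 by (simp add: vsym Pb_def)
    qed
    have nonnegU: "0 \<le> v \<bullet> blin b u" if u: "u \<in> UF" for u
    proof -
      have "- (a \<bullet> Pb t0) + s * (- (a \<bullet> Pl u)) \<le> - \<beta>" if "0 \<le> s" for s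
      proof -
        have "\<beta> < a \<bullet> (Pb t0 + s *\<^sub>R Pl u)" using ab(2) inW[OF t0TF u that] by blast
        then show ?thesis by (simp add: inner_add_right)
      qed
      then have "- (a \<bullet> Pl u) \<le> 0" by (rule sigma_lemma)
      then show ?thesis by (simp add: vsym Pl_def)
    qed
    have AlinV: "Alin A u *v v = 0" if u: "u \<in> UF" for u
    proof -
      have "t0 + 1 *\<^sub>R u \<in> Fc" by (rule recF[OF t0F u]) simp
      then have "Agam A0 A (t0 + 1 *\<^sub>R u) *v v = 0" by (rule Av)
      moreover have "Agam A0 A (t0 + 1 *\<^sub>R u) = Agam A0 A t0 + Alin A u"
        by (simp add: Agam_lin Alin_add add.assoc)
      ultimately show ?thesis using Av[OF t0F] by (simp add: matrix_vector_mult_add_rdistrib)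
    qed
    define xt where "xt \<tau> = xh + (- \<tau>) *\<^sub>R v" for \<tau> :: real
    have ev1: "\<forall>u\<in>U. eventually (\<lambda>\<tau>. u \<bullet> svec A b c (xt \<tau>) \<le> 0) (at_right 0)"
    proof
      fix u assume uU: "u \<in> U"
      have expand: "u \<bullet> svec A b c (xt \<tau>) = u \<bullet> sx + 2*(-\<tau>)*(v \<bullet> (Alin A u *v xh + blin b u)) + (-\<tau>)^2*(v \<bullet> (Alin A u *v v))" for \<tau>
        unfolding xt_def sx_def qf_lin[symmetric] by (rule qf_shift[OF sym_Alin[OF symA]])
      show "eventually (\<lambda>\<tau>. u \<bullet> svec A b c (xt \<tau>) \<le> 0) (at_right 0)"
      proof (cases "u \<in> UF")
        case True
        have z1: "Alin A u *v v = 0" by (rule AlinV[OF True])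
        have z2: "v \<bullet> (Alin A u *v xh) = 0" using sym_inner[OF sym_Alin[OF symA, where g=u], where v=v and w=xh] z1 by simp
        have z3: "u \<bullet> sx = 0" using True by (simp add: UF_def)
        have nn: "0 \<le> v \<bullet> blin b u" by (rule nonnegU[OF True])
        show ?thesis
        proof (rule eventually_mono[OF eventually_at_right_less])
          fix \<tau> :: real assume "0 < \<tau>"
          then show "u \<bullet> svec A b c (xt \<tau>) \<le> 0"
            unfolding expand z1 using z2 z3 nn by (simp add: inner_add_right mult_nonneg_nonneg)
        qed
      next
        case False
        then have "u \<bullet> sx < 0" using sxD uU by (auto simp: UF_def order_less_le)
        from ev_small[OF this, of "v \<bullet> (Alin A u *v xh + blin b u)" "v \<bullet> (Alin A u *v v)"]
        show ?thesis by (rule eventually_mono) (simp add: expand)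
      qed
    qed
    have ev2: "\<forall>t\<in>T. eventually (\<lambda>\<tau>. L bb t (xt \<tau>) < \<phi> xh) (at_right 0)"
    proof
      fix t assume tT: "t \<in> T"
      have expand: "L bb t (xt \<tau>) = L bb t xh + 2*(-\<tau>)*(v \<bullet> (Agam A0 A t *v xh + bgam bb b t)) + (-\<tau>)^2*(v \<bullet> (Agam A0 A t *v v))" for \<tau>
        unfolding xt_def L_qf by (rule qf_shift[OF sym_Agam[OF symA0 symA]])
      show "eventually (\<lambda>\<tau>. L bb t (xt \<tau>) < \<phi> xh) (at_right 0)"
      proof (cases "t \<in> TF")
        case True
        have tF: "t \<in> Fc" using True TFF by blast
        have z1: "Agam A0 A t *v v = 0" by (rule Av[OF tF])
        have z2: "v \<bullet> (Agam A0 A t *v xh) = 0" using sym_inner[OF sym_Agam[OF symA0 symA, where g=t], where v=v and w=xh] z1 by simp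
        have z3: "L bb t xh = \<phi> xh" using True by (simp add: TF_def)
        have pp: "0 < v \<bullet> bgam bb b t" by (rule posT[OF True])
        show ?thesis
        proof (rule eventually_mono[OF eventually_at_right_less])
          fix \<tau> :: real assume "0 < \<tau>"
          then show "L bb t (xt \<tau>) < \<phi> xh"
            unfolding expand z1 using z2 z3 pp by (simp add: inner_add_right)
        qed
      next
        case False
        then have "L bb t xh < \<phi> xh" using Tle[OF tT, of xh] tT by (auto simp: TF_def order_less_le)
        from ev_small[OF this, of "v \<bullet> (Agam A0 A t *v xh + bgam bb b t)" "v \<bullet> (Agam A0 A t *v v)"]
        show ?thesis by (rule eventually_mono) (simp add: expand)
      qed
    qed
    have "eventually (\<lambda>\<tau>. (\<forall>u\<in>U. u \<bullet> svec A b c (xt \<tau>) \<le> 0) \<and> (\<forall>t\<in>T. L bb t (xt \<tau>) < \<phi> xh)) (at_right 0)"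
      using eventually_ball_finite[OF finU ev1] eventually_ball_finite[OF finT(1) ev2] by (rule eventually_conj)
    then obtain \<tau> where \<tau>: "\<forall>u\<in>U. u \<bullet> svec A b c (xt \<tau>) \<le> 0" "\<forall>t\<in>T. L bb t (xt \<tau>) < \<phi> xh"
      using eventually_happens'[OF trivial_limit_at_right_real] by blast
    have "xt \<tau> \<in> D" using \<tau>(1) by (simp add: D_def)
    moreover have "\<phi> (xt \<tau>) < \<phi> xh" unfolding \<phi>_def[of "xt \<tau>"] using finT \<tau>(2) by (subst Max_less_iff) auto
    ultimately have False using hmin by fastforce
    then show ?thesis by blast
  qed
qed

end


lemma qf_pert: "qf A0 (b0 + h) c0 x = qf A0 b0 c0 x + 2 * (h \<bullet> x)"
  by (simp add: qf_def inner_add_left algebra_simps)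

lemma frob_pert: "frob (blk c0 (b0 + h) A0) (blk 1 x X) = frob (blk c0 b0 A0) (blk 1 x X) + 2 * (h \<bullet> x)"
  by (simp add: frob_blk inner_add_left algebra_simps)

lemma bgam_pert: "bgam (b0 + h) b g = bgam b0 b g + h"
  by (simp add: bgam_def algebra_simps)

theorem mainTheorem18:
  fixes A0 :: "real^'n^'n" and b0 :: "real^'n" and c0 :: real
    and I :: "('m::finite) set"
    and A :: "'m \<Rightarrow> real^'n^'n" and b :: "'m \<Rightarrow> real^'n" and c :: "'m \<Rightarrow> real"
  assumes symA0: "sym_mat A0" and symA: "\<And>i. sym_mat (A i)"
    and assmA1: "qcqp_feas I A b c \<noteq> {}"
    and assmA2: "\<exists>g. (\<forall>i\<in>I. 0 \<le> g $ i) \<and> pd (Agam A0 A g)"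
    and assmC: "polyhedron (Gam A0 A I)"
    and hyp: "\<exists>h :: nat \<Rightarrow> real^'n. h \<longlonglongrightarrow> 0 \<and>
       (\<forall>F. semidef_face A0 A I F \<longrightarrow>
          (\<forall>j. (0::real^'n) \<notin> proj (Vsp A0 A F) ` {bgam b0 b g + h j | g. g \<in> F}))"
  shows "Opt A0 b0 c0 I A b c = Opt_SDP A0 b0 c0 I A b c"
proof -
  obtain gs where gsI: "\<forall>i\<in>I. 0 \<le> gs $ i" and gspd: "pd (Agam A0 A gs)" using assmA2 by blast
  interpret Q: qc A0 A b c c0 I gs
    by unfold_locales (use symA0 symA assmC gsI gspd in auto)
  obtain h :: "nat \<Rightarrow> real^'n" where hlim: "h \<longlonglongrightarrow> 0"
    and hh: "\<And>F j. semidef_face A0 A I F \<Longrightarrow> (0::real^'n) \<notin> proj (Vsp A0 A F) ` {bgam b0 b g + h j | g. g \<in> F}"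
    using hyp by blast
  obtain x0 where x0: "x0 \<in> qcqp_feas I A b c" using assmA1 by blast
  have ex: "\<exists>xh\<in>qcqp_feas I A b c. (\<forall>x X. sdpok I A b c x X \<longrightarrow> qf A0 (b0 + h j) c0 xh \<le> frob (blk c0 (b0 + h j) A0) (blk 1 x X))
            \<and> Q.L (b0 + h j) gs xh \<le> qf A0 (b0 + h j) c0 x0" for j
  proof (rule Q.core[OF _ x0])
    fix F assume "semidef_face A0 A I F"
    from hh[OF this, of j] show "\<forall>g\<in>F. proj (Vsp A0 A F) (bgam (b0 + h j) b g) \<noteq> 0"
      by (auto simp: bgam_pert)
  qed
  then obtain xs where xsF: "\<And>j. xs j \<in> qcqp_feas I A b c"
    and xsS: "\<And>j x X. sdpok I A b c x X \<Longrightarrow> qf A0 (b0 + h j) c0 (xs j) \<le> frob (blk c0 (b0 + h j) A0) (blk 1 x X)"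
    and xsB: "\<And>j. Q.L (b0 + h j) gs (xs j) \<le> qf A0 (b0 + h j) c0 x0"
    by metis
  have "Bseq h" using hlim by (rule convergent_imp_Bseq[OF convergentI])
  then obtain H where H: "H > 0" "\<And>n. norm (h n) \<le> H" by (rule BseqE) blast
  obtain l where l: "l > 0" "\<And>bb x. l * (norm x)^2 - 2 * norm (bgam bb b gs) * norm x + (c0 + clin c gs) \<le> Q.L bb gs x"
    using Q.L_coercive by blast
  define B where "B = norm (bgam b0 b gs) + H"
  define C where "C = qf A0 b0 c0 x0 + 2 * H * norm x0"
  define \<kappa> where "\<kappa> = c0 + clin c gs"
  define R where "R = max 1 ((2 * B + \<bar>C - \<kappa>\<bar>) / l)"
  have R0: "0 \<le> R" by (simp add: R_def)
  have bound: "norm (xs j) \<le> R" for j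
  proof -
    have nb: "norm (bgam (b0 + h j) b gs) \<le> B"
      using norm_triangle_ineq[of "bgam b0 b gs" "h j"] H(2)[of j] by (simp add: bgam_pert B_def)
    have "l * (norm (xs j))^2 - 2 * B * norm (xs j) + \<kappa> \<le> l * (norm (xs j))^2 - 2 * norm (bgam (b0 + h j) b gs) * norm (xs j) + \<kappa>"
      using nb by (simp add: mult_right_mono)
    also have "\<dots> \<le> Q.L (b0 + h j) gs (xs j)" using l(2) by (simp add: \<kappa>_def)
    also have "\<dots> \<le> qf A0 (b0 + h j) c0 x0" by (rule xsB)
    also have "\<dots> \<le> C"
    proof -
      have "2 * (h j \<bullet> x0) \<le> 2 * (H * norm x0)"
        using Cauchy_Schwarz_ineq2[of "h j" x0] H(2)[of j] by (smt (verit) mult_right_mono norm_ge_zero)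
      then show ?thesis by (simp add: qf_pert C_def)
    qed
    finally show ?thesis unfolding R_def
      by (intro radius_bound l(1)) (auto simp: B_def H(1) less_imp_le)
  qed
  have le1: "Opt A0 b0 c0 I A b c \<le> Opt_SDP A0 b0 c0 I A b c"
    unfolding Opt_SDP_def
  proof (rule INF_greatest)
    fix Y assume "Y \<in> sdp_feas I A b c"
    then obtain x X where Y: "Y = blk 1 x X" and ok: "sdpok I A b c x X"
      by (auto simp: sdp_feas_def sdpok_def)
    show "Opt A0 b0 c0 I A b c \<le> ereal (frob (blk c0 b0 A0) Y)"
    proof (rule ereal_le_epsilon2)
      fix e :: real assume e: "0 < e"
      define r where "r = e / (2 * (norm x + R) + 1)"
      have r: "r > 0" using e R0 by (simp add: r_def add_nonneg_pos)
      obtain j where j: "norm (h j) < r" using hlim r unfolding LIMSEQ_iff by fastforce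
      have "qf A0 b0 c0 (xs j) + 2 * (h j \<bullet> xs j) \<le> frob (blk c0 b0 A0) Y + 2 * (h j \<bullet> x)"
        using xsS[OF ok, of j] by (simp add: qf_pert frob_pert Y)
      then have "qf A0 b0 c0 (xs j) \<le> frob (blk c0 b0 A0) Y + 2 * (h j \<bullet> x - h j \<bullet> xs j)" by simp
      also have "\<dots> \<le> frob (blk c0 b0 A0) Y + 2 * (norm (h j) * (norm x + R))"
      proof -
        have "h j \<bullet> x - h j \<bullet> xs j = h j \<bullet> (x - xs j)" by (simp add: inner_diff_right)
        also have "\<dots> \<le> norm (h j) * norm (x - xs j)" by (rule real_inner_class.Cauchy_Schwarz_ineq2[THEN abs_le_D1])
        also have "\<dots> \<le> norm (h j) * (norm x + R)"
          using norm_triangle_ineq4[of x "xs j"] bound[of j] by (intro mult_left_mono) auto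
        finally show ?thesis by simp
      qed
      also have "\<dots> \<le> frob (blk c0 b0 A0) Y + e"
      proof -
        have "norm (h j) * (2 * (norm x + R) + 1) \<le> r * (2 * (norm x + R) + 1)"
          using j R0 by (intro mult_right_mono) auto
        also have "\<dots> = e"
        proof -
          have "2 * (norm x + R) + 1 > 0" using R0 by (simp add: add_nonneg_pos)
          then show ?thesis by (simp add: r_def)
        qed
        finally show ?thesis using R0 by (simp add: algebra_simps) (smt (verit) mult_nonneg_nonneg norm_ge_zero)
      qed
      finally have "qf A0 b0 c0 (xs j) \<le> frob (blk c0 b0 A0) Y + e" .
      moreover have "Opt A0 b0 c0 I A b c \<le> ereal (qf A0 b0 c0 (xs j))"
        unfolding Opt_def by (rule INF_lower[OF xsF])
      ultimately show "Opt A0 b0 c0 I A b c \<le> ereal (frob (blk c0 b0 A0) Y) + ereal e"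
        by (metis order_trans ereal_less_eq(3) plus_ereal.simps(1))
    qed
  qed
  have le2: "Opt_SDP A0 b0 c0 I A b c \<le> Opt A0 b0 c0 I A b c"
    unfolding Opt_def
  proof (rule INF_greatest)
    fix x assume xf: "x \<in> qcqp_feas I A b c"
    have "blk 1 x (outer x x) \<in> sdp_feas I A b c"
      using xf unfolding sdp_feas_def qcqp_feas_def
      by (intro CollectI exI[of _ x] exI[of _ "outer x x"]) (auto simp: frob_blk_rank1 psd_blk_rank1 sym_outer)
    then have "Opt_SDP A0 b0 c0 I A b c \<le> ereal (frob (blk c0 b0 A0) (blk 1 x (outer x x)))"
      unfolding Opt_SDP_def by (rule INF_lower)
    then show "Opt_SDP A0 b0 c0 I A b c \<le> ereal (qf A0 b0 c0 x)" by (simp add: frob_blk_rank1)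
  qed
  show ?thesis using le1 le2 by (rule antisym)
qed


end
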